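(* Let $A, B, C, F \in \mathbb{R}^{n\times n}$ with $B$ and $C$ invertible, and suppose $\sigma_{\min}(B^{-1}AC^{-1}) > 1$. Then the matrix equation $$AX + B\lvert CX\rvert = F$$ has exactly one solution $X \in \mathbb{R}^{n\times n}$.
   Context: $\sigma_{\min}(\cdot)$ is the smallest singular value and $\lvert M\rvert$ the entrywise absolute value of a matrix $M$. *)

theory Defs
  imports "HOL-Analysis.Analysis"
begin

definition eigenvalues_mat :: "real^'n^'n \<Rightarrow> real set" where
  "eigenvalues_mat M = {c. \<exists>v. v \<noteq> 0 \<and> M *v v = c *\<^sub>R v}"

definition sigma_min :: "real^'n^'n \<Rightarrow> real" where
  "sigma_min M = sqrt (Min (eigenvalues_mat (transpose M ** M)))"

definition mat_abs :: "real^'n^'m \<Rightarrow> real^'n^'m" where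
  "mat_abs M = (\<chi> i j. \<bar>M $ i $ j\<bar>)"

end

theory Submission
  imports Defs
begin

lemma lin_vanish:
  fixes a b :: real
  assumes "\<And>t. 0 \<le> 2*t*a + t^2*b"
  shows "a = 0"
proof (rule ccontr)
  assume "a \<noteq> 0"
  define c where "c = \<bar>b\<bar> + 1"
  have c: "c > 0" "b \<le> c" unfolding c_def by auto
  define t where "t = - a / c"
  have "0 \<le> 2*t*a + t^2*b" by (rule assms)
  also have "\<dots> = (a^2/c^2) * (b - 2*c)" unfolding t_def using c
    by (simp add: field_simps power2_eq_square)
  also have "\<dots> < 0"
  proof -
    have "a^2/c^2 > 0" using \<open>a \<noteq> 0\<close> c by simp
    moreover have "b - 2*c < 0" using c by simp
    ultimately show ?thesis by (rule mult_pos_neg)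
  qed
  finally show False by simp
qed

lemma normsq_add: "(norm (a + t *\<^sub>R b))^2 = (norm a)^2 + 2*t*inner a b + t^2 * (norm (b::'a::real_inner))^2"
proof -
  have "(norm (a + t *\<^sub>R b))^2 = inner (a + t *\<^sub>R b) (a + t *\<^sub>R b)" by (rule power2_norm_eq_inner)
  also have "\<dots> = inner a a + 2*t*inner a b + t^2 * inner b b"
    by (simp add: inner_add_left inner_add_right inner_commute power2_eq_square)
  finally show ?thesis by (simp add: power2_norm_eq_inner)
qed

lemma inner_Mv: "inner ((M::real^'n^'n) *v x) (M *v y) = inner ((transpose M ** M) *v x) y"
  by (metis dot_lmul_matrix matrix_vector_mul_assoc transpose_matrix_vector inner_commute)

lemma spectral_min:
  fixes M :: "real^'n^'n"
  defines "S \<equiv> transpose M ** M"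
  obtains \<mu> where "finite (eigenvalues_mat S)" "\<mu> \<in> eigenvalues_mat S"
    "\<And>l. l \<in> eigenvalues_mat S \<Longrightarrow> \<mu> \<le> l"
    "\<And>v. \<mu> * (norm v)^2 \<le> (norm (M *v v))^2"
proof -
  define q where "q = (\<lambda>v. (norm (M *v v))^2)"
  have cq: "continuous_on (sphere 0 1) q" unfolding q_def
    by (auto intro!: continuous_intros)
  have ne: "sphere (0::real^'n) 1 \<noteq> {}"
  proof -
    have "norm (axis undefined (1::real) :: real^'n) = 1" by simp
    then show ?thesis by auto
  qed
  obtain v0 where v0: "v0 \<in> sphere 0 1" and mn: "\<And>y. y \<in> sphere 0 1 \<Longrightarrow> q v0 \<le> q y"
    using continuous_attains_inf[OF compact_sphere ne cq] by blast
  define \<mu> where "\<mu> = q v0"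
  have nv0: "norm v0 = 1" using v0 by simp
  have bound: "\<mu> * (norm v)^2 \<le> (norm (M *v v))^2" for v
  proof (cases "v = 0")
    case True then show ?thesis by simp
  next
    case False
    define u where "u = (1 / norm v) *\<^sub>R v"
    have "u \<in> sphere 0 1" using False unfolding u_def by simp
    hence "\<mu> \<le> q u" using mn unfolding \<mu>_def by blast
    also have "q u = (norm (M *v v))^2 / (norm v)^2"
      unfolding q_def u_def by (simp add: matrix_vector_mult_scaleR power_divide)
    finally show ?thesis using False by (simp add: field_simps)
  qed
  have key: "inner (M *v v0) (M *v w) = \<mu> * inner v0 w" for w
  proof -
    have "0 \<le> 2*t*(inner (M *v v0) (M *v w) - \<mu> * inner v0 w) + t^2*((norm (M *v w))^2 - \<mu>*(norm w)^2)" for t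
    proof -
      have "0 \<le> (norm (M *v (v0 + t *\<^sub>R w)))^2 - \<mu> * (norm (v0 + t *\<^sub>R w))^2"
        using bound[of "v0 + t *\<^sub>R w"] by simp
      also have "\<dots> = 2*t*(inner (M *v v0) (M *v w) - \<mu> * inner v0 w) + t^2*((norm (M *v w))^2 - \<mu>*(norm w)^2)"
        using nv0 unfolding \<mu>_def q_def
        by (simp add: matrix_vector_right_distrib matrix_vector_mult_scaleR normsq_add algebra_simps)
      finally show ?thesis .
    qed
    then show ?thesis using lin_vanish by fastforce
  qed
  have ev: "S *v v0 = \<mu> *\<^sub>R v0"
  proof -
    have "inner (S *v v0 - \<mu> *\<^sub>R v0) w = 0" for w
      using key[of w] unfolding S_def by (simp add: inner_Mv inner_diff_left)
    from this[of "S *v v0 - \<mu> *\<^sub>R v0"] show ?thesis by simp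
  qed
  have sym: "inner (S *v x) y = inner x (S *v y)" for x y
    unfolding S_def by (metis inner_Mv inner_commute)
  define E where "E = eigenvalues_mat S"
  have muE: "\<mu> \<in> E" unfolding E_def eigenvalues_mat_def proof -
    have "v0 \<noteq> 0" using nv0 by auto
    then show "\<mu> \<in> {c. \<exists>v. v \<noteq> 0 \<and> S *v v = c *\<^sub>R v}" using ev by blast
  qed
  have low: "\<mu> \<le> l" if "l \<in> E" for l
  proof -
    have "\<exists>v. v \<noteq> 0 \<and> S *v v = l *\<^sub>R v" using that unfolding E_def eigenvalues_mat_def by simp
    then obtain v where v: "v \<noteq> 0" "S *v v = l *\<^sub>R v" by blast
    have "l * (norm v)^2 = inner (S *v v) v" using v by (simp add: power2_norm_eq_inner)
    also have "\<dots> = (norm (M *v v))^2" unfolding S_def by (metis inner_Mv power2_norm_eq_inner)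
    finally have "\<mu> * (norm v)^2 \<le> l * (norm v)^2" using bound[of v] by simp
    moreover have "(norm v)^2 > 0" using v by simp
    ultimately show ?thesis by (rule mult_right_le_imp_le)
  qed
  define f where "f = (\<lambda>l. SOME v. v \<noteq> 0 \<and> S *v v = l *\<^sub>R v)"
  have f: "f l \<noteq> 0 \<and> S *v f l = l *\<^sub>R f l" if "l \<in> E" for l
  proof -
    have "\<exists>v. v \<noteq> 0 \<and> S *v v = l *\<^sub>R v" using that unfolding E_def eigenvalues_mat_def by simp
    then show ?thesis unfolding f_def by (rule someI_ex)
  qed
  have orth: "inner (f l) (f l') = 0" if "l \<in> E" "l' \<in> E" "l \<noteq> l'" for l l'
  proof -
    have "l * inner (f l) (f l') = inner (S *v f l) (f l')" using f[OF that(1)] by simp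
    also have "\<dots> = inner (f l) (S *v f l')" by (rule sym)
    also have "\<dots> = l' * inner (f l) (f l')" using f[OF that(2)] by simp
    finally show ?thesis using that(3) by simp
  qed
  have inj: "inj_on f E"
  proof (rule inj_onI, rule ccontr)
    fix l l' assume "l \<in> E" "l' \<in> E" "f l = f l'" "l \<noteq> l'"
    then have "inner (f l) (f l) = 0" using orth by metis
    then show False using f[OF \<open>l \<in> E\<close>] by simp
  qed
  have "pairwise orthogonal (f ` E)"
    unfolding pairwise_def orthogonal_def
  proof (intro ballI impI)
    fix x y assume "x \<in> f ` E" "y \<in> f ` E" "x \<noteq> y"
    then obtain l l' where "l \<in> E" "l' \<in> E" "x = f l" "y = f l'" by blast
    then show "inner x y = 0" using orth \<open>x \<noteq> y\<close> by blast
  qed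
  moreover have "0 \<notin> f ` E" using f by auto
  ultimately have "independent (f ` E)" by (rule pairwise_orthogonal_independent)
  then have "finite (f ` E)" using independent_bound by blast
  then have "finite E" using inj finite_imageD by blast
  then show ?thesis using muE low bound unfolding E_def by (rule that)
qed


lemma frob: "(norm (Z::real^'n^'m))^2 = (\<Sum>j\<in>UNIV. (norm (column j Z))^2)"
proof -
  have "(norm Z)^2 = (\<Sum>i\<in>UNIV. \<Sum>j\<in>UNIV. Z$i$j * Z$i$j)"
    by (simp add: power2_norm_eq_inner inner_vec_def inner_real_def)
  also have "\<dots> = (\<Sum>j\<in>UNIV. \<Sum>i\<in>UNIV. Z$i$j * Z$i$j)" by (rule sum.swap)
  also have "\<dots> = (\<Sum>j\<in>UNIV. (norm (column j Z))^2)"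
    by (simp add: power2_norm_eq_inner inner_vec_def inner_real_def column_def)
  finally show ?thesis .
qed

lemma column_mult: "column j ((M::real^'n^'m) ** Z) = M *v column j Z"
  by (simp add: vec_eq_iff column_def matrix_matrix_mult_def matrix_vector_mult_def)

lemma mat_bound:
  fixes M :: "real^'n^'n"
  assumes "\<And>v. \<mu> * (norm v)^2 \<le> (norm (M *v v))^2" "\<mu> \<ge> 0"
  shows "sqrt \<mu> * norm (Z::real^'k^'n) \<le> norm (M ** Z)"
proof -
  have "\<mu> * (norm Z)^2 \<le> (norm (M ** Z))^2"
    unfolding frob column_mult sum_distrib_left by (rule sum_mono) (rule assms(1))
  then have "sqrt (\<mu> * (norm Z)^2) \<le> sqrt ((norm (M ** Z))^2)" by (rule real_sqrt_le_mono)
  then show ?thesis using assms(2) by (simp add: real_sqrt_mult)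
qed

lemma mat_abs_lip: "norm (mat_abs Z - mat_abs W) \<le> norm (Z - (W::real^'n^'m))"
  unfolding mat_abs_def
  by (intro norm_le_componentwise_cart) (simp add: abs_triangle_ineq3)

lemma matrix_diff_ldistrib: "(M::real^'n^'m) ** (Y1 - Y2) = M ** Y1 - M ** Y2"
  by (metis add_diff_cancel matrix_add_ldistrib diff_add_cancel)

lemma core:
  fixes M G :: "real^'n^'n"
  assumes bnd: "\<And>Z::real^'n^'n. k * norm Z \<le> norm (M ** Z)" and k: "k > 1"
  shows "\<exists>!Y. M ** Y + mat_abs Y = G"
proof -
  have inj: "M *v x = 0 \<Longrightarrow> x = 0" for x
  proof -
    assume h: "M *v x = 0"
    define Z :: "real^'n^'n" where "Z = (\<chi> i j. x $ i)"
    have "M ** Z = 0" using h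
      by (simp add: Z_def vec_eq_iff matrix_matrix_mult_def matrix_vector_mult_def sum_distrib_left[symmetric])
    then have "k * norm Z \<le> 0" using bnd[of Z] by simp
    then have "Z = 0" using k by (smt (verit) mult_pos_pos zero_less_norm_iff)
    then show "x = 0" by (simp add: Z_def vec_eq_iff)
  qed
  then obtain N where NM: "N ** M = mat 1" using matrix_left_invertible_ker by blast
  then have MN: "M ** N = mat 1" using matrix_left_right_inverse by blast
  have Nb: "norm (N ** D) \<le> (1/k) * norm D" for D :: "real^'n^'n"
  proof -
    have "k * norm (N ** D) \<le> norm (M ** (N ** D))" by (rule bnd)
    also have "M ** (N ** D) = D" by (simp add: matrix_mul_assoc MN)
    finally show ?thesis using k by (simp add: field_simps)
  qed
  define T where "T = (\<lambda>Y. N ** (G - mat_abs Y))"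
  have "\<exists>!Y. T Y = Y"
  proof (rule banach_fix_type)
    show "0 \<le> 1/k" "1/k < 1" using k by auto
    show "\<forall>x y. dist (T x) (T y) \<le> 1/k * dist x y"
    proof (intro allI)
      fix x y :: "real^'n^'n"
      have "T x - T y = N ** (mat_abs y - mat_abs x)"
        unfolding T_def matrix_diff_ldistrib[symmetric] by simp
      then have "dist (T x) (T y) \<le> 1/k * norm (mat_abs y - mat_abs x)"
        using Nb dist_norm by metis
      also have "\<dots> \<le> 1/k * norm (y - x)" using mat_abs_lip[of y x] k by (intro mult_left_mono) auto
      finally show "dist (T x) (T y) \<le> 1/k * dist x y" by (simp add: dist_norm norm_minus_commute)
    qed
  qed
  then obtain Y where "T Y = Y" by blast
  then have "M ** Y = M ** (N ** (G - mat_abs Y))" unfolding T_def by simp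
  also have "\<dots> = G - mat_abs Y" by (simp add: matrix_mul_assoc MN)
  finally have ex: "M ** Y + mat_abs Y = G" by simp
  have uq: "Y1 = Y2" if "M ** Y1 + mat_abs Y1 = G" "M ** Y2 + mat_abs Y2 = G" for Y1 Y2
  proof -
    have "M ** (Y1 - Y2) = mat_abs Y2 - mat_abs Y1"
      using that by (simp add: matrix_diff_ldistrib algebra_simps)
    then have "k * norm (Y1 - Y2) \<le> norm (Y2 - Y1)" using bnd[of "Y1 - Y2"] mat_abs_lip[of Y2 Y1] by simp
    then have "k * norm (Y1 - Y2) \<le> 1 * norm (Y1 - Y2)" by (simp add: norm_minus_commute)
    then have "(k - 1) * norm (Y1 - Y2) \<le> 0" by (simp add: algebra_simps)
    then have "norm (Y1 - Y2) \<le> 0" using k by (simp add: mult_le_0_iff)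
    then show ?thesis by simp
  qed
  show ?thesis using ex uq by blast
qed


lemma inv_props:
  assumes "invertible (B::real^'n^'n)"
  shows "B ** matrix_inv B = mat 1" "matrix_inv B ** B = mat 1"
proof -
  have "\<exists>B'. B ** B' = mat 1 \<and> B' ** B = mat 1" using assms unfolding invertible_def by blast
  then have "B ** matrix_inv B = mat 1 \<and> matrix_inv B ** B = mat 1"
    unfolding matrix_inv_def by (rule someI_ex)
  then show "B ** matrix_inv B = mat 1" "matrix_inv B ** B = mat 1" by auto
qed

theorem corollary4p1:
  fixes A B C F :: "real^'n^'n"
  assumes "invertible B" and "invertible C"
    and "sigma_min (matrix_inv B ** A ** matrix_inv C) > 1"
  shows "\<exists>!X :: real^'n^'n. A ** X + B ** mat_abs (C ** X) = F"
proof -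
  define Bi where "Bi = matrix_inv B"
  define Ci where "Ci = matrix_inv C"
  define M where "M = Bi ** A ** Ci"
  have B1: "B ** Bi = mat 1" "Bi ** B = mat 1" using inv_props[OF assms(1)] unfolding Bi_def by auto
  have C1: "C ** Ci = mat 1" "Ci ** C = mat 1" using inv_props[OF assms(2)] unfolding Ci_def by auto
  obtain \<mu> where fin: "finite (eigenvalues_mat (transpose M ** M))"
    and mu: "\<mu> \<in> eigenvalues_mat (transpose M ** M)"
    and low: "\<And>l. l \<in> eigenvalues_mat (transpose M ** M) \<Longrightarrow> \<mu> \<le> l"
    and bd: "\<And>v. \<mu> * (norm v)^2 \<le> (norm (M *v v))^2"
    using spectral_min[of M] by metis
  have "Min (eigenvalues_mat (transpose M ** M)) = \<mu>"
    using fin mu low by (intro Min_eqI) auto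
  then have "sigma_min M = sqrt \<mu>" unfolding sigma_min_def by simp
  then have k: "sqrt \<mu> > 1" using assms(3) unfolding M_def Bi_def Ci_def by simp
  then have "\<mu> \<ge> 0" using real_sqrt_less_iff by fastforce
  then have bnd: "sqrt \<mu> * norm Z \<le> norm (M ** Z)" for Z :: "real^'n^'n"
    using mat_bound bd by blast
  define G where "G = Bi ** F"
  have eqv: "(A ** X + B ** mat_abs (C ** X) = F) \<longleftrightarrow> (M ** (C ** X) + mat_abs (C ** X) = G)" for X
  proof
    assume h: "A ** X + B ** mat_abs (C ** X) = F"
    have "M ** (C ** X) = Bi ** A ** X"
      unfolding M_def by (metis C1(2) matrix_mul_assoc matrix_mul_rid)
    moreover have "Bi ** (A ** X + B ** mat_abs (C ** X)) = Bi ** A ** X + mat_abs (C ** X)"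
      by (simp add: matrix_add_ldistrib matrix_mul_assoc B1)
    ultimately show "M ** (C ** X) + mat_abs (C ** X) = G" using h unfolding G_def by simp
  next
    assume h: "M ** (C ** X) + mat_abs (C ** X) = G"
    have "M ** (C ** X) = Bi ** A ** X"
      unfolding M_def by (metis C1(2) matrix_mul_assoc matrix_mul_rid)
    then have "Bi ** (A ** X + B ** mat_abs (C ** X)) = Bi ** F"
      using h unfolding G_def by (simp add: matrix_add_ldistrib matrix_mul_assoc B1)
    then have "B ** (Bi ** (A ** X + B ** mat_abs (C ** X))) = B ** (Bi ** F)" by simp
    then show "A ** X + B ** mat_abs (C ** X) = F" by (simp add: matrix_mul_assoc B1)
  qed
  obtain Y where Y: "M ** Y + mat_abs Y = G" and Yu: "\<And>Y'. M ** Y' + mat_abs Y' = G \<Longrightarrow> Y' = Y"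
    using core[OF bnd k, of G] by metis
  show ?thesis
  proof (rule ex1I)
    have "C ** (Ci ** Y) = Y" by (simp add: matrix_mul_assoc C1)
    then show "A ** (Ci ** Y) + B ** mat_abs (C ** (Ci ** Y)) = F" using eqv[of "Ci ** Y"] Y by simp
  next
    fix X assume "A ** X + B ** mat_abs (C ** X) = F"
    then have "C ** X = Y" using eqv Yu by blast
    then have "Ci ** (C ** X) = Ci ** Y" by simp
    then show "X = Ci ** Y" by (simp add: matrix_mul_assoc C1)
  qed
qed

end
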